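(* Let $M$ be a $k\times k$ matrix (for some $k\ge1$) all of whose entries are positive integers, such that $M^2=3M$. Then $M$ is one of $$M_1=(3),\ M_2=\begin{pmatrix}2&1\\2&1\end{pmatrix},\ M_3=\begin{pmatrix}2&2\\1&1\end{pmatrix},\ M_4=\begin{pmatrix}1&1\\2&2\end{pmatrix},\ M_5=\begin{pmatrix}1&2\\1&2\end{pmatrix},\ M_6=\begin{pmatrix}1&1&1\\1&1&1\\1&1&1\end{pmatrix}.$$ *)

theory Defs
  imports "Jordan_Normal_Form.Matrix"
begin

definition M1 :: "int mat" where "M1 = mat_of_rows_list 1 [[3]]"
definition M2 :: "int mat" where "M2 = mat_of_rows_list 2 [[2,1],[2,1]]"
definition M3 :: "int mat" where "M3 = mat_of_rows_list 2 [[2,2],[1,1]]"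
definition M4 :: "int mat" where "M4 = mat_of_rows_list 2 [[1,1],[2,2]]"
definition M5 :: "int mat" where "M5 = mat_of_rows_list 2 [[1,2],[1,2]]"
definition M6 :: "int mat" where "M6 = mat_of_rows_list 3 [[1,1,1],[1,1,1],[1,1,1]]"

end

theory Submission
  imports Defs
begin

lemma diag_aux:
  fixes a s :: int
  assumes "a \<ge> 1" "a*a + s = 3*a" "s \<ge> 1"
  shows "s = 2 \<and> (a = 1 \<or> a = 2)"
proof -
  have "a \<le> 2"
  proof (rule ccontr)
    assume "\<not> a \<le> 2" then have "a \<ge> 3" by simp
    then have "a*a \<ge> 3*a" by simp
    with assms show False by simp
  qed
  then have "a = 1 \<or> a = 2" using assms(1) by auto
  then show ?thesis using assms by auto
qed

lemma prod_one:
  fixes x y :: int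
  assumes "x \<ge> 1" "y \<ge> 1" "x*y = 1"
  shows "x = 1 \<and> y = 1"
proof -
  have "x*1 \<le> x*y" using assms by (intro mult_left_mono) auto
  then have "x = 1" using assms by simp
  then show ?thesis using assms by simp
qed

lemma prod_two:
  fixes x y :: int
  assumes "x \<ge> 1" "y \<ge> 1" "x*y = 2"
  shows "(x = 1 \<and> y = 2) \<or> (x = 2 \<and> y = 1)"
proof -
  have "x*1 \<le> x*y" using assms by (intro mult_left_mono) auto
  then have "x \<le> 2" using assms by simp
  then have "x = 1 \<or> x = 2" using assms by auto
  then show ?thesis using assms by auto
qed

lemma quad_bound:
  fixes a :: int
  shows "3*a \<le> a*a + 2"
proof (cases "a \<le> 1")
  case True
  then have "0 \<le> (a-1)*(a-2)" by (intro mult_nonpos_nonpos) auto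
  then show ?thesis by (simp add: algebra_simps)
next
  case False
  then have "0 \<le> (a-1)*(a-2)" by (intro mult_nonneg_nonneg) auto
  then show ?thesis by (simp add: algebra_simps)
qed

lemma one_le_prod:
  fixes x y :: int
  assumes "x \<ge> 1" "y \<ge> 1"
  shows "1 \<le> x*y"
  using mult_mono[of 1 x 1 y] assms by simp

lemma three_aux:
  fixes a x y z w :: int
  assumes "a \<ge> 1" "x \<ge> 1" "y \<ge> 1" "z \<ge> 1" "w \<ge> 1"
    "a*a + (x*y + z*w) = 3*a"
  shows "x = 1 \<and> y = 1 \<and> z = 1 \<and> w = 1"
proof -
  have p: "x*y \<ge> 1" "z*w \<ge> 1" using assms one_le_prod by auto
  then have "x*y + z*w = 2" using diag_aux[OF assms(1) assms(6)] by simp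
  then have "x*y = 1" "z*w = 1" using p by auto
  then show ?thesis using prod_one assms by blast
qed

theorem mainTheorem8:
  fixes M :: "int mat" and k :: nat
  assumes "k \<ge> 1"
    and "M \<in> carrier_mat k k"
    and "\<forall>i<k. \<forall>j<k. M $$ (i, j) > 0"
    and "M ^\<^sub>m 2 = 3 \<cdot>\<^sub>m M"
  shows "M = M1 \<or> M = M2 \<or> M = M3 \<or> M = M4 \<or> M = M5 \<or> M = M6"
proof -
  have MM: "M * M = 3 \<cdot>\<^sub>m M"
    using assms(4) assms(2) by (simp add: numeral_2_eq_2)
  have eq: "(\<Sum>l<k. M $$ (i,l) * M $$ (l,j)) = 3 * M $$ (i,j)" if "i<k" "j<k" for i j
  proof -
    have "(M * M) $$ (i,j) = (3 \<cdot>\<^sub>m M) $$ (i,j)" using MM by simp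
    then show ?thesis using that assms(2)
      by (simp add: scalar_prod_def lessThan_atLeast0)
  qed
  have pos: "M $$ (i,j) \<ge> 1" if "i<k" "j<k" for i j
    using assms(3) that by fastforce
  have k3: "k \<le> 3"
  proof -
    have "(\<Sum>l<k. M $$ (0,l) * M $$ (l,0)) = M $$ (0,0) * M $$ (0,0) + (\<Sum>l\<in>{1..<k}. M $$ (0,l) * M $$ (l,0))"
      using assms(1) by (simp add: lessThan_atLeast0 sum.atLeast_Suc_lessThan)
    moreover have "(\<Sum>l\<in>{1..<k}. M $$ (0,l) * M $$ (l,0)) \<ge> (\<Sum>l\<in>{1..<k}. 1)"
      by (rule sum_mono) (use pos assms(1) in \<open>auto intro: one_le_prod\<close>)
    ultimately have "M $$ (0,0) * M $$ (0,0) + int (k - 1) \<le> 3 * M $$ (0,0)"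
      using eq[of 0 0] assms(1) by simp
    moreover have "M $$ (0,0) \<ge> 1" using pos assms(1) by simp
    ultimately have "int (k-1) \<le> 2"
      using quad_bound[of "M $$ (0,0)"] by linarith
    then show ?thesis by simp
  qed
  have e: "\<And>i j. i<k \<Longrightarrow> j<k \<Longrightarrow> (\<Sum>l<k. M $$ (i,l) * M $$ (l,j)) = 3 * M $$ (i,j)"
    using eq by blast
  have dimr: "dim_row M = k" and dimc: "dim_col M = k" using assms(2) by auto
  consider "k = 1" | "k = 2" | "k = 3" using k3 assms(1) by linarith
  then show ?thesis
  proof cases
    case 1
    have "M $$ (0,0) * M $$ (0,0) = 3 * M $$ (0,0)" using e[of 0 0] 1 by simp
    moreover have "M $$ (0,0) \<ge> 1" using pos[of 0 0] 1 by simp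
    ultimately have v: "M $$ (0,0) = 3" by simp
    have "M = M1" unfolding M1_def mat_of_rows_list_def
      by (rule eq_matI) (use 1 dimr dimc v in auto)
    then show ?thesis by blast
  next
    case 2
    define a b c d where "a = M $$ (0,0)" "b = M $$ (0,1)" "c = M $$ (1,0)" "d = M $$ (1,1)"
    have ps: "a \<ge> 1" "b \<ge> 1" "c \<ge> 1" "d \<ge> 1" using pos 2 unfolding a_b_c_d_def by auto
    have e00: "a*a + b*c = 3*a" using e[of 0 0] 2 unfolding a_b_c_d_def by (simp add: numeral_2_eq_2)
    have e11: "c*b + d*d = 3*d" using e[of 1 1] 2 unfolding a_b_c_d_def by (simp add: numeral_2_eq_2)
    have e01: "a*b + b*d = 3*b" using e[of 0 1] 2 unfolding a_b_c_d_def by (simp add: numeral_2_eq_2)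
    have "b*(a+d) = b*3" using e01 by (simp add: algebra_simps)
    then have ad: "a + d = 3" using ps by simp
    have bc1: "b*c \<ge> 1" using ps one_le_prod by blast
    from diag_aux[OF ps(1) e00 bc1] have bc: "b*c = 2" and a12: "a = 1 \<or> a = 2" by auto
    from prod_two[OF ps(2) ps(3) bc] have bcc: "(b = 1 \<and> c = 2) \<or> (b = 2 \<and> c = 1)" .
    have Mf: "M = mat_of_rows_list 2 [[a,b],[c,d]]" unfolding mat_of_rows_list_def
      by (rule eq_matI) (use 2 dimr dimc in \<open>auto simp: a_b_c_d_def less_Suc_eq numeral_2_eq_2\<close>)
    show ?thesis using a12 bcc ad Mf unfolding M2_def M3_def M4_def M5_def by auto
  next
    case 3
    define m where "m = (\<lambda>i j. M $$ (i,j))"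
    have ps: "\<And>i j. i < 3 \<Longrightarrow> j < 3 \<Longrightarrow> m i j \<ge> 1" using pos 3 unfolding m_def by auto
    have ee: "\<And>i j. i < 3 \<Longrightarrow> j < 3 \<Longrightarrow> m i 0 * m 0 j + m i 1 * m 1 j + m i 2 * m 2 j = 3 * m i j"
      using e 3 unfolding m_def by (simp add: numeral_3_eq_3 numeral_2_eq_2)
    have e00: "m 0 0 * m 0 0 + (m 0 1 * m 1 0 + m 0 2 * m 2 0) = 3 * m 0 0"
      using ee[of 0 0] by simp
    have e11: "m 1 1 * m 1 1 + (m 0 1 * m 1 0 + m 1 2 * m 2 1) = 3 * m 1 1"
      using ee[of 1 1] by (simp add: algebra_simps)
    have e22: "m 2 2 * m 2 2 + (m 0 2 * m 2 0 + m 1 2 * m 2 1) = 3 * m 2 2"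
      using ee[of 2 2] by (simp add: algebra_simps)
    have o: "m 0 1 = 1" "m 0 2 = 1" "m 1 0 = 1" "m 1 2 = 1" "m 2 0 = 1" "m 2 1 = 1"
    proof -
      have "m 0 0 \<ge> 1" "m 0 1 \<ge> 1" "m 1 0 \<ge> 1" "m 0 2 \<ge> 1" "m 2 0 \<ge> 1"
        "m 1 1 \<ge> 1" "m 1 2 \<ge> 1" "m 2 1 \<ge> 1" by (simp_all add: ps)
      then have A: "m 0 1 = 1 \<and> m 1 0 = 1 \<and> m 0 2 = 1 \<and> m 2 0 = 1"
        and B: "m 0 1 = 1 \<and> m 1 0 = 1 \<and> m 1 2 = 1 \<and> m 2 1 = 1"
        using three_aux[OF _ _ _ _ _ e00] three_aux[OF _ _ _ _ _ e11] by blast+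
      show "m 0 1 = 1" "m 0 2 = 1" "m 1 0 = 1" "m 1 2 = 1" "m 2 0 = 1" "m 2 1 = 1"
        using A B by simp_all
    qed
    have d1: "m 0 0 + m 1 1 = 2" using ee[of 0 1] o by simp
    have d2: "m 0 0 + m 2 2 = 2" using ee[of 0 2] o by simp
    have "m 0 0 \<ge> 1" "m 1 1 \<ge> 1" "m 2 2 \<ge> 1" by (simp_all add: ps)
    then have d: "m 0 0 = 1" "m 1 1 = 1" "m 2 2 = 1" using d1 d2 by auto
    have i3: "i < 3 \<Longrightarrow> i = 0 \<or> i = 1 \<or> i = 2" for i :: nat by auto
    have ent: "M $$ (i,j) = [[1,1,1],[1,1,1],[1,1,1::int]] ! i ! j" if "i<3" "j<3" for i j
    proof -
      have o': "M $$ (0,1) = 1" "M $$ (0,2) = 1" "M $$ (1,0) = 1" "M $$ (1,2) = 1"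
        "M $$ (2,0) = 1" "M $$ (2,1) = 1" "M $$ (0,0) = 1" "M $$ (1,1) = 1" "M $$ (2,2) = 1"
        using o d unfolding m_def by simp_all
      from i3[OF that(1)] i3[OF that(2)] show ?thesis
        by (elim disjE) (simp_all add: o' o'[unfolded One_nat_def] o'[unfolded numeral_2_eq_2 One_nat_def] numeral_2_eq_2)
    qed
    have "M = M6" unfolding M6_def mat_of_rows_list_def
    proof (rule eq_matI)
      fix i j assume ij: "i < dim_row (mat (length [[1,1,1],[1,1,1],[1,1,1::int]]) 3 (\<lambda>(i, j). [[1,1,1],[1,1,1],[1,1,1::int]] ! i ! j))"
        "j < dim_col (mat (length [[1,1,1],[1,1,1],[1,1,1::int]]) 3 (\<lambda>(i, j). [[1,1,1],[1,1,1],[1,1,1::int]] ! i ! j))"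
      then have "i < 3" "j < 3" by simp_all
      then show "M $$ (i, j) = mat (length [[1,1,1],[1,1,1],[1,1,1::int]]) 3 (\<lambda>(i, j). [[1,1,1],[1,1,1],[1,1,1::int]] ! i ! j) $$ (i, j)"
        apply (subst index_mat(1))
        using \<open>i < 3\<close> apply (simp only: list.size numeral_3_eq_3)
        using \<open>j < 3\<close> apply simp
        unfolding case_prod_conv by (rule ent[OF \<open>i < 3\<close> \<open>j < 3\<close>])
    qed (simp_all add: dimr dimc 3)
    then show ?thesis by blast
  qed
qed

end
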